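(* Let $G$ be a connected threshold graph with binary string $b=0^{s_1}1^{t_1}\cdots 0^{s_k}1^{t_k}$ (all $s_i,t_i\geq 1$). Let $m=2k$ if $s_1=1$ and $m=2k+1$ if $s_1\geq 2$. Then the anti-regular graph $A_m$ is an induced subgraph of $G$, and in either case $A_m$ is the largest anti-regular graph contained in $G$ as an induced subgraph.
   Context: Threshold graphs from binary strings: given $b=b_1b_2\cdots b_n\in\{0,1\}^n$ with $b_1=0$, let $G_1$ be a single vertex, and for $j=2,\ldots,n$ obtain $G_j$ from $G_{j-1}$ by adding a new vertex which is adjacent to all previous vertices if $b_j=1$ and isolated if $b_j=0$; $G(b)=G_n$ and $b$ is called the binary string of $G(b)$. The notation $0^{s}$ (resp. $1^t$) denotes $s$ consecutive zeros (resp. $t$ consecutive ones). The anti-regular graph $A_m$ is $G(b)$ with $b=0101\cdots01$ (length $m$) when $m$ is even and $b=00101\cdots01$ (length $m$) when $m$ is odd. *)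

theory Defs
  imports Main
begin

text \<open>Binary strings are lists of booleans (True = 1, False = 0), indexed from 0,
so the paper's b_j is b ! (j-1). The threshold graph G(b) has vertex set
{0..<length b}; for i < j, vertices i and j are adjacent iff b ! j = 1
(vertex j was added as a dominating vertex).\<close>

definition thr_adj :: "bool list \<Rightarrow> nat \<Rightarrow> nat \<Rightarrow> bool" where
  "thr_adj b i j \<longleftrightarrow> i \<noteq> j \<and> i < length b \<and> j < length b \<and> b ! (max i j)"

definition graph_connected :: "nat \<Rightarrow> (nat \<Rightarrow> nat \<Rightarrow> bool) \<Rightarrow> bool" where
  "graph_connected n E \<longleftrightarrow> n \<ge> 1 \<and>
     (\<forall>u<n. \<forall>v<n. (\<lambda>x y. x < n \<and> y < n \<and> E x y)\<^sup>*\<^sup>* u v)"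

text \<open>Binary string of the anti-regular graph A_m: for m even 0101...01,
for m odd 00101...01 (for m = 1 this is the string 0).\<close>
definition antireg_string :: "nat \<Rightarrow> bool list" where
  "antireg_string m =
     (if even m then map (\<lambda>i. odd i) [0..<m]
      else map (\<lambda>i. i \<ge> 1 \<and> even i) [0..<m])"

definition antireg_adj :: "nat \<Rightarrow> nat \<Rightarrow> nat \<Rightarrow> bool" where
  "antireg_adj m = thr_adj (antireg_string m)"

definition induced_subgraph_of ::
  "nat \<Rightarrow> (nat \<Rightarrow> nat \<Rightarrow> bool) \<Rightarrow> nat \<Rightarrow> (nat \<Rightarrow> nat \<Rightarrow> bool) \<Rightarrow> bool" where
  "induced_subgraph_of nH H nG G \<longleftrightarrow>
     (\<exists>f. inj_on f {..<nH} \<and> f ` {..<nH} \<subseteq> {..<nG} \<and>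
          (\<forall>u<nH. \<forall>v<nH. G (f u) (f v) \<longleftrightarrow> H u v))"

text \<open>The string 0^{s_1} 1^{t_1} ... 0^{s_k} 1^{t_k}, with s_{i+1} = s i, t_{i+1} = t i.\<close>
definition block_string :: "nat \<Rightarrow> (nat \<Rightarrow> nat) \<Rightarrow> (nat \<Rightarrow> nat) \<Rightarrow> bool list" where
  "block_string k s t = concat (map (\<lambda>i. replicate (s i) False @ replicate (t i) True) [0..<k])"

end

theory Submission
  imports Defs
begin

definition twin :: "(nat \<Rightarrow> nat \<Rightarrow> bool) \<Rightarrow> nat set \<Rightarrow> nat \<Rightarrow> nat \<Rightarrow> bool" where
  "twin E S u v \<longleftrightarrow> (\<forall>w\<in>S. w \<noteq> u \<longrightarrow> w \<noteq> v \<longrightarrow> (E u w \<longleftrightarrow> E v w))"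

lemma antireg_len[simp]: "length (antireg_string n) = n"
  by (simp add: antireg_string_def)

lemma antireg_alt:
  assumes "1 \<le> i" "i + 1 < n"
  shows "antireg_string n ! i \<noteq> antireg_string n ! (i+1)"
  using assms by (auto simp: antireg_string_def nth_append simp del: upt_Suc)

lemma antireg_twin:
  assumes "u < n" "v < n" "u < v" "twin (antireg_adj n) {..<n} u v"
  shows "u = 0 \<and> v = 1"
proof (rule ccontr)
  assume H: "\<not> (u = 0 \<and> v = 1)"
  let ?a = "antireg_string n"
  show False
  proof (cases "v \<ge> u + 2")
    case True
    define w where "w = v - 1"
    have w: "w < n" "w \<noteq> u" "w \<noteq> v" "u < w" "w < v" "1 \<le> w" using True assms unfolding w_def by auto
    have "antireg_adj n u w \<longleftrightarrow> antireg_adj n v w" using assms(4) w unfolding twin_def by auto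
    hence "?a ! w = ?a ! v" using w assms by (auto simp: antireg_adj_def thr_adj_def max_def)
    moreover have "?a ! w \<noteq> ?a ! (w+1)" using antireg_alt[of w n] w assms by auto
    ultimately show False using True w_def by (simp add: w_def)
  next
    case False
    hence v: "v = u + 1" "u \<ge> 1" using H assms by auto
    define w where "w = u - 1"
    have w: "w < n" "w \<noteq> u" "w \<noteq> v" "w < u" using v assms unfolding w_def by auto
    have "antireg_adj n u w \<longleftrightarrow> antireg_adj n v w" using assms(4) w unfolding twin_def by auto
    hence "?a ! u = ?a ! v" using w assms by (auto simp: antireg_adj_def thr_adj_def max_def)
    moreover have "?a ! u \<noteq> ?a ! (u+1)" using antireg_alt[of u n] v assms by auto
    ultimately show False using v by simp
  qed
qed

lemma twin_thr:
  assumes "S \<subseteq> {..<length b}" "x \<in> S" "y \<in> S" "x < y"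
    "\<forall>w\<in>S. w < x \<longrightarrow> b ! x = b ! y"
    "\<forall>w\<in>S. x < w \<longrightarrow> w < y \<longrightarrow> b ! w = b ! y"
  shows "twin (thr_adj b) S x y"
  unfolding twin_def
proof (intro ballI impI)
  fix w assume w: "w \<in> S" "w \<noteq> x" "w \<noteq> y"
  have "w < length b" "x < length b" "y < length b" using assms w by auto
  note L = this
  consider "w < x" | "x < w \<and> w < y" | "y < w" using w by linarith
  then show "thr_adj b x w = thr_adj b y w"
  proof cases
    case 1
    then have "max x w = x" "max y w = y" using assms(4) by auto
    moreover have "b ! x = b ! y" using assms(5) w(1) 1 by blast
    ultimately show ?thesis using L w by (simp add: thr_adj_def)
  next
    case 2
    then have "max x w = w" "max y w = y" by auto
    moreover have "b ! w = b ! y" using assms(6) w(1) 2 by blast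
    ultimately show ?thesis using L w by (simp add: thr_adj_def)
  next
    case 3
    then have "max x w = w" "max y w = w" using assms(4) by auto
    then show ?thesis using L w by (simp add: thr_adj_def)
  qed
qed

lemma bs_Suc: "block_string (Suc k) s t = block_string k s t @ replicate (s k) False @ replicate (t k) True"
  by (simp add: block_string_def)

lemma block_idx:
  "\<exists>idx. (\<forall>x<length (block_string k s t). idx x < 2*k) \<and>
     (\<forall>x y. x \<le> y \<longrightarrow> y < length (block_string k s t) \<longrightarrow> idx x \<le> idx y) \<and>
     (\<forall>x y. x < length (block_string k s t) \<longrightarrow> y < length (block_string k s t) \<longrightarrow> idx x = idx y
        \<longrightarrow> block_string k s t ! x = block_string k s t ! y) \<and>
     (\<forall>x<length (block_string k s t). idx x = 0 \<longrightarrow> x < s 0)"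
proof (induction k)
  case 0
  then show ?case by (simp add: block_string_def)
next
  case (Suc k)
  let ?b = "block_string k s t"
  let ?L = "length ?b"
  from Suc obtain idx where I1: "\<forall>x<?L. idx x < 2*k"
    and I2: "\<forall>x y. x \<le> y \<longrightarrow> y < ?L \<longrightarrow> idx x \<le> idx y"
    and I3: "\<forall>x y. x < ?L \<longrightarrow> y < ?L \<longrightarrow> idx x = idx y \<longrightarrow> ?b ! x = ?b ! y"
    and I4: "\<forall>x<?L. idx x = 0 \<longrightarrow> x < s 0" by blast
  define idx' where "idx' x = (if x < ?L then idx x else if x < ?L + s k then 2*k else 2*k+1)" for x
  show ?case unfolding bs_Suc
  proof (intro exI[of _ idx'] conjI allI impI)
    fix x assume "x < length (?b @ replicate (s k) False @ replicate (t k) True)"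
    then show "idx' x < 2 * Suc k"
      using I1 by (cases "x < ?L") (force simp: idx'_def)+
  next
    fix x y assume "x \<le> y" "y < length (?b @ replicate (s k) False @ replicate (t k) True)"
    then show "idx' x \<le> idx' y"
    proof (cases "x < ?L")
      case True
      then show ?thesis using I1 I2 \<open>x \<le> y\<close>
        by (cases "y < ?L") (force simp: idx'_def)+
    next
      case False
      then show ?thesis using \<open>x \<le> y\<close> by (simp add: idx'_def)
    qed
  next
    fix x y assume A: "x < length (?b @ replicate (s k) False @ replicate (t k) True)"
      "y < length (?b @ replicate (s k) False @ replicate (t k) True)" "idx' x = idx' y"
    then show "(?b @ replicate (s k) False @ replicate (t k) True) ! x = (?b @ replicate (s k) False @ replicate (t k) True) ! y"
    proof -
      let ?c = "?b @ replicate (s k) False @ replicate (t k) True"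
      have nth_c: "?c ! z = (if z < ?L then ?b ! z else if z < ?L + s k then False else True)"
        if "z < length ?c" for z
        using that by (auto simp: nth_append)
      have i1: "z < ?L \<Longrightarrow> idx' z < 2*k" for z using I1 by (simp add: idx'_def)
      have i2: "\<not> z < ?L \<Longrightarrow> idx' z \<ge> 2*k" for z by (simp add: idx'_def)
      have i3: "\<not> z < ?L \<Longrightarrow> z < ?L + s k \<Longrightarrow> idx' z = 2*k" for z by (simp add: idx'_def)
      have i4: "\<not> z < ?L + s k \<Longrightarrow> idx' z = 2*k+1" for z by (simp add: idx'_def)
      have e1: "x < ?L \<longleftrightarrow> y < ?L" using i1 i2 A(3) by (metis not_le)
      have e2: "x < ?L + s k \<longleftrightarrow> y < ?L + s k"
      proof (cases "x < ?L")
        case True then show ?thesis using e1 by simp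
      next
        case False
        then have "\<not> y < ?L" using e1 by simp
        then show ?thesis using False i3[of x] i3[of y] i4[of x] i4[of y] A(3) by force
      qed
      show ?thesis
      proof (cases "x < ?L")
        case True
        then have "y < ?L" using e1 by simp
        moreover have "idx' x = idx x" using True by (simp add: idx'_def)
        moreover have "idx' y = idx y" using \<open>y < ?L\<close> by (simp add: idx'_def)
        ultimately have "idx x = idx y" using A(3) by argo
        then have "?b ! x = ?b ! y" using I3 True \<open>y < ?L\<close> by blast
        then show ?thesis using True \<open>y < ?L\<close> by (simp add: nth_append)
      next
        case False
        then have "\<not> y < ?L" using e1 by simp
        then show ?thesis using False e2 A(1,2) by (auto simp: nth_append)
      qed
    qed
  next
    fix x assume "x < length (?b @ replicate (s k) False @ replicate (t k) True)" "idx' x = 0"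
    then show "x < s 0"
    proof (cases "x < ?L")
      case True
      then show ?thesis using I4 \<open>idx' x = 0\<close> by (simp add: idx'_def)
    next
      case False
      hence "k = 0" using \<open>idx' x = 0\<close> by (simp add: idx'_def split: if_splits)
      then show ?thesis using False \<open>idx' x = 0\<close> by (simp add: idx'_def block_string_def split: if_splits)
    qed
  qed
qed


lemma block_ends:
  assumes "\<forall>i<k. s i \<ge> 1 \<and> t i \<ge> 1"
  shows "\<exists>e. (\<forall>j<2*k. e j < length (block_string k s t)) \<and>
     (\<forall>i j. i < j \<longrightarrow> j < 2*k \<longrightarrow> e i < e j) \<and>
     (\<forall>j<2*k. block_string k s t ! (e j) = odd j) \<and>
     (k \<ge> 1 \<longrightarrow> e 0 = s 0 - 1)"
  using assms
proof (induction k)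
  case 0
  then show ?case by simp
next
  case (Suc k)
  let ?b = "block_string k s t"
  let ?L = "length ?b"
  from Suc obtain e where E1: "\<forall>j<2*k. e j < ?L"
    and E2: "\<forall>i j. i < j \<longrightarrow> j < 2*k \<longrightarrow> e i < e j"
    and E3: "\<forall>j<2*k. ?b ! (e j) = odd j"
    and E4: "k \<ge> 1 \<longrightarrow> e 0 = s 0 - 1" by auto
  have sk: "s k \<ge> 1" "t k \<ge> 1" using Suc.prems by auto
  define e' where "e' j = (if j < 2*k then e j else if j = 2*k then ?L + s k - 1 else ?L + s k + t k - 1)" for j
  let ?c = "?b @ replicate (s k) False @ replicate (t k) True"
  have len: "length ?c = ?L + s k + t k" by simp
  show ?case unfolding bs_Suc
  proof (intro exI[of _ e'] conjI allI impI)
    fix j assume j: "j < 2 * Suc k"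
    show "e' j < length ?c"
    proof (cases "j < 2*k")
      case True
      then have "e j < ?L" using E1 by blast
      then show ?thesis using True by (simp add: e'_def)
    next
      case False
      then show ?thesis using sk len by (cases "j = 2*k") (simp_all add: e'_def)
    qed
  next
    fix i j assume ij: "i < j" "j < 2 * Suc k"
    show "e' i < e' j"
    proof (cases "j < 2*k")
      case True
      then show ?thesis using E2 ij by (simp add: e'_def)
    next
      case False
      have ej: "e' j \<ge> ?L" using False sk by (cases "j = 2*k") (simp_all add: e'_def)
      show ?thesis
      proof (cases "i < 2*k")
        case True
        then have "e i < ?L" using E1 by blast
        then show ?thesis using True ej by (simp add: e'_def)
      next
        case False2: False
        then have "i = 2*k" "j = 2*k+1" using False ij by auto
        then show ?thesis using sk by (simp add: e'_def)
      qed
    qed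
  next
    fix j assume j: "j < 2 * Suc k"
    show "?c ! (e' j) = odd j"
    proof (cases "j < 2*k")
      case True
      then have "e' j < ?L" "e' j = e j" using E1 by (simp_all add: e'_def)
      then show ?thesis using E3 True by (simp add: nth_append)
    next
      case False
      then have "j = 2*k \<or> j = 2*k+1" using j by auto
      then consider "j = 2*k" | "j = 2*k+1" by blast
      then show ?thesis
      proof cases
        case 1
        then have "e' j = ?L + (s k - 1)" using sk by (simp add: e'_def)
        moreover have "?c ! (?L + (s k - 1)) = (replicate (s k) False @ replicate (t k) True) ! (s k - 1)"
          by (rule nth_append_length_plus)
        ultimately show ?thesis using 1 sk by (simp add: nth_append)
      next
        case 2
        then have "e' j = ?L + s k + (t k - 1)" using sk by (simp add: e'_def)
        moreover have "?c ! (?L + (s k + (t k - 1))) = (replicate (s k) False @ replicate (t k) True) ! (s k + (t k - 1))"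
          by (rule nth_append_length_plus)
        ultimately show ?thesis using 2 sk by (simp add: nth_append add.assoc)
      qed
    qed
  next
    assume "Suc k \<ge> 1"
    show "e' 0 = s 0 - 1"
    proof (cases "k = 0")
      case True
      then show ?thesis by (simp add: e'_def block_string_def)
    next
      case False
      then show ?thesis using E4 by (simp add: e'_def)
    qed
  qed
qed

lemma embed:
  assumes "length a = n" "\<forall>i j. i < j \<longrightarrow> j < n \<longrightarrow> f i < f j" "\<forall>j<n. f j < length b"
    "\<forall>w. 1 \<le> w \<longrightarrow> w < n \<longrightarrow> b ! (f w) = a ! w"
  shows "induced_subgraph_of n (thr_adj a) (length b) (thr_adj b)"
  unfolding induced_subgraph_of_def
proof (intro exI[of _ f] conjI allI impI)
  show "inj_on f {..<n}"
  proof (rule inj_onI)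
    fix x y assume "x \<in> {..<n}" "y \<in> {..<n}" "f x = f y"
    then show "x = y" using assms(2) by (metis lessThan_iff linorder_neqE_nat less_irrefl)
  qed
  show "f ` {..<n} \<subseteq> {..<length b}" using assms(3) by auto
next
  fix u v assume uv: "u < n" "v < n"
  consider "u = v" | "u < v" | "v < u" by linarith
  then show "thr_adj b (f u) (f v) = thr_adj a u v"
  proof cases
    case 1
    then show ?thesis by (simp add: thr_adj_def)
  next
    case 2
    then have "f u < f v" using assms(2) uv by blast
    moreover have "b ! (f v) = a ! v" using assms(4) 2 uv by simp
    ultimately show ?thesis using 2 uv assms(1,3) by (simp add: thr_adj_def max_def)
  next
    case 3
    then have "f v < f u" using assms(2) uv by blast
    moreover have "b ! (f u) = a ! u" using assms(4) 3 uv by simp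
    ultimately show ?thesis using 3 uv assms(1,3) by (simp add: thr_adj_def max_def)
  qed
qed


lemma twin_sym: "twin E S u v \<longleftrightarrow> twin E S v u"
  unfolding twin_def by auto

lemma antireg_twin':
  assumes "u < n" "v < n" "u \<noteq> v" "twin (antireg_adj n) {..<n} u v"
  shows "{u, v} = {0, 1}"
proof (cases "u < v")
  case True
  then show ?thesis using antireg_twin[OF assms(1,2) True assms(4)] by auto
next
  case False
  then have "v < u" using assms(3) by simp
  moreover have "twin (antireg_adj n) {..<n} v u" using assms(4) twin_sym by metis
  ultimately show ?thesis using antireg_twin[OF assms(2,1)] by auto
qed

lemma twin_pull:
  assumes "inj_on f {..<n}" "\<forall>u<n. \<forall>v<n. G (f u) (f v) \<longleftrightarrow> H u v"
    "u < n" "v < n" "twin G (f ` {..<n}) (f u) (f v)"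
  shows "twin H {..<n} u v"
  unfolding twin_def
proof (intro ballI impI)
  fix w assume w: "w \<in> {..<n}" "w \<noteq> u" "w \<noteq> v"
  have "f w \<noteq> f u" "f w \<noteq> f v" using w assms(1,3,4) inj_on_eq_iff[OF assms(1)] by auto
  then have "G (f u) (f w) \<longleftrightarrow> G (f v) (f w)" using assms(5) w(1) unfolding twin_def by blast
  then show "H u w \<longleftrightarrow> H v w" using assms(2,3,4) w(1) by auto
qed

theorem theorem3p2:
  fixes k :: nat and s t :: "nat \<Rightarrow> nat" and b :: "bool list" and m :: nat
  assumes "k \<ge> 1"
    and "\<forall>i<k. s i \<ge> 1 \<and> t i \<ge> 1"
    and "b = block_string k s t"
    and "graph_connected (length b) (thr_adj b)"
    and "m = (if s 0 = 1 then 2 * k else 2 * k + 1)"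
  shows "induced_subgraph_of m (antireg_adj m) (length b) (thr_adj b) \<and>
         (\<forall>m'. induced_subgraph_of m' (antireg_adj m') (length b) (thr_adj b) \<longrightarrow> m' \<le> m)"
proof
  obtain e where E1: "\<forall>j<2*k. e j < length b"
    and E2: "\<forall>i j. i < j \<longrightarrow> j < 2*k \<longrightarrow> e i < e j"
    and E3: "\<forall>j<2*k. b ! (e j) = odd j"
    and E4: "e 0 = s 0 - 1"
    using block_ends[OF assms(2)] assms(1,3) by auto
  show "induced_subgraph_of m (antireg_adj m) (length b) (thr_adj b)"
  proof (cases "s 0 = 1")
    case True
    then have m: "m = 2*k" using assms(5) by simp
    show ?thesis unfolding antireg_adj_def
    proof (rule embed[where f = e])
      show "length (antireg_string m) = m" by simp
      show "\<forall>i j. i < j \<longrightarrow> j < m \<longrightarrow> e i < e j" using E2 m by simp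
      show "\<forall>j<m. e j < length b" using E1 m by simp
      show "\<forall>w. 1 \<le> w \<longrightarrow> w < m \<longrightarrow> b ! e w = antireg_string m ! w"
        using E3 m by (simp add: antireg_string_def del: upt_Suc)
    qed
  next
    case False
    have "s 0 \<ge> 1" using assms(1,2) by auto
    then have s0: "s 0 \<ge> 2" using False by linarith
    have m: "m = 2*k+1" using assms(5) False by simp
    define f where "f w = (if w = 0 then 0 else e (w - 1))" for w
    have epos: "\<forall>j<2*k. e j > 0"
    proof (intro allI impI)
      fix j assume "j < 2*k"
      then have "e 0 \<le> e j" using E2 by (cases "j = 0") (auto intro: less_imp_le)
      then show "e j > 0" using E4 s0 by simp
    qed
    show ?thesis unfolding antireg_adj_def
    proof (rule embed[where f = f])
      show "length (antireg_string m) = m" by simp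
      show "\<forall>i j. i < j \<longrightarrow> j < m \<longrightarrow> f i < f j"
      proof (intro allI impI)
        fix i j assume ij: "i < j" "j < m"
        show "f i < f j"
        proof (cases "i = 0")
          case True
          then show ?thesis using ij epos m by (simp add: f_def)
        next
          case False
          then show ?thesis using ij E2 m by (simp add: f_def)
        qed
      qed
      show "\<forall>j<m. f j < length b"
      proof (intro allI impI)
        fix j assume "j < m"
        then show "f j < length b"
        proof (cases "j = 0")
          case True
          have "0 < 2*k" using assms(1) by simp
          then have "e 0 < length b" using E1 by blast
          then have "0 < length b" by linarith
          then show ?thesis using True by (simp add: f_def)
        next
          case False
          then show ?thesis using E1 m \<open>j < m\<close> by (simp add: f_def)
        qed
      qed
      show "\<forall>w. 1 \<le> w \<longrightarrow> w < m \<longrightarrow> b ! f w = antireg_string m ! w"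
      proof (intro allI impI)
        fix w assume w: "1 \<le> w" "w < m"
        then have "b ! f w = odd (w - 1)" using E3 m by (simp add: f_def)
        also have "\<dots> = (w \<ge> 1 \<and> even w)" using w by auto
        also have "\<dots> = antireg_string m ! w" using w m by (simp add: antireg_string_def del: upt_Suc)
        finally show "b ! f w = antireg_string m ! w" .
      qed
    qed
  qed
next
  show "\<forall>m'. induced_subgraph_of m' (antireg_adj m') (length b) (thr_adj b) \<longrightarrow> m' \<le> m"
  proof (intro allI impI)
    fix n assume "induced_subgraph_of n (antireg_adj n) (length b) (thr_adj b)"
    then obtain f where finj: "inj_on f {..<n}" and fS: "f ` {..<n} \<subseteq> {..<length b}"
      and fadj: "\<forall>u<n. \<forall>v<n. thr_adj b (f u) (f v) \<longleftrightarrow> antireg_adj n u v"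
      unfolding induced_subgraph_of_def by blast
    obtain idx where I1: "\<forall>x<length b. idx x < 2*k"
      and I2: "\<forall>x y. x \<le> y \<longrightarrow> y < length b \<longrightarrow> idx x \<le> idx y"
      and I3: "\<forall>x y. x < length b \<longrightarrow> y < length b \<longrightarrow> idx x = idx y \<longrightarrow> b ! x = b ! y"
      and I4: "\<forall>x<length b. idx x = 0 \<longrightarrow> x < s 0"
      using block_idx[of k s t] assms(3) by blast
    show "n \<le> m"
    proof (cases "n = 0")
      case True then show ?thesis by simp
    next
      case False
      define S where "S = f ` {..<n}"
      have finS: "finite S" and neS: "S \<noteq> {}" using False by (auto simp: S_def)
      have cardS: "card S = n" using finj by (simp add: S_def card_image)
      define s0 where "s0 = Min S"
      have s0S: "s0 \<in> S" and s0min: "\<forall>w\<in>S. s0 \<le> w" using finS neS by (auto simp: s0_def)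
      define S' where "S' = S - {s0}"
      have cardS': "card S' = n - 1" using cardS s0S finS by (simp add: S'_def)
      have Sb: "S \<subseteq> {..<length b}" using fS by (simp add: S_def)
      have key: False if xy: "x \<in> S'" "y \<in> S'" "x < y" "idx x = idx y" for x y
      proof -
        have yb: "y < length b" "x < length b" using xy Sb by (auto simp: S'_def)
        have const: "b ! w = b ! y" if "x \<le> w" "w \<le> y" for w
        proof -
          have wb: "w < length b" using that yb by linarith
          have "idx x \<le> idx w" using I2 that(1) wb by blast
          moreover have "idx w \<le> idx y" using I2 that(2) yb by blast
          ultimately have "idx w = idx y" using xy(4) by linarith
          then show ?thesis using I3 wb yb by blast
        qed
        have xS: "x \<in> S" "y \<in> S" using xy by (auto simp: S'_def)
        have txy: "twin (thr_adj b) S x y"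
        proof (rule twin_thr[OF Sb xS xy(3)])
          have "b ! x = b ! y" using xy(3) by (intro const) auto
          then show "\<forall>w\<in>S. w < x \<longrightarrow> b ! x = b ! y" by blast
          show "\<forall>w\<in>S. x < w \<longrightarrow> w < y \<longrightarrow> b ! w = b ! y"
          proof (intro ballI impI)
            fix w assume "w \<in> S" "x < w" "w < y"
            then show "b ! w = b ! y" by (intro const) auto
          qed
        qed
        have neS': "S' \<noteq> {}" using xy by auto
        have finS': "finite S'" using finS by (simp add: S'_def)
        define s1 where "s1 = Min S'"
        have s1S': "s1 \<in> S'" and s1min: "\<forall>w\<in>S'. s1 \<le> w" using finS' neS' by (auto simp: s1_def)
        have s01: "s0 < s1" using s1S' s0min by (auto simp: S'_def le_less)
        have t01: "twin (thr_adj b) S s0 s1"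
        proof (rule twin_thr[OF Sb s0S _ s01])
          show "s1 \<in> S" using s1S' by (simp add: S'_def)
          show "\<forall>w\<in>S. w < s0 \<longrightarrow> b ! s0 = b ! s1" using s0min by auto
          show "\<forall>w\<in>S. s0 < w \<longrightarrow> w < s1 \<longrightarrow> b ! w = b ! s1"
          proof (intro ballI impI)
            fix w assume w: "w \<in> S" "s0 < w" "w < s1"
            then have "w \<in> S'" by (auto simp: S'_def)
            then have "s1 \<le> w" using s1min by blast
            then show "b ! w = b ! s1" using w by simp
          qed
        qed
        have inS: "z \<in> S \<Longrightarrow> \<exists>u<n. f u = z" for z by (auto simp: S_def)
        obtain u0 where u0: "u0 < n" "f u0 = s0" using inS[OF s0S] by blast
        obtain u1 where u1: "u1 < n" "f u1 = s1" using inS s1S' by (auto simp: S'_def)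
        obtain ux where ux: "ux < n" "f ux = x" using inS xy by (auto simp: S'_def)
        obtain uy where uy: "uy < n" "f uy = y" using inS xy by (auto simp: S'_def)
        have T1: "twin (antireg_adj n) {..<n} u0 u1"
          using twin_pull[OF finj fadj u0(1) u1(1)] t01 u0 u1 by (simp add: S_def)
        have N1: "u0 \<noteq> u1" using u0 u1 s01 by auto
        have A: "{u0, u1} = {0, 1}" by (rule antireg_twin'[OF u0(1) u1(1) N1 T1])
        have T2: "twin (antireg_adj n) {..<n} ux uy"
          using twin_pull[OF finj fadj ux(1) uy(1)] txy ux uy by (simp add: S_def)
        have N2: "ux \<noteq> uy" using ux uy xy by auto
        have B: "{ux, uy} = {0, 1}" by (rule antireg_twin'[OF ux(1) uy(1) N2 T2])
        have "u0 \<in> {0, 1}" by (simp only: A[symmetric]) simp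
        then have "u0 \<in> {ux, uy}" by (simp only: B)
        then have "u0 = ux \<or> u0 = uy" by simp
        then have "s0 = x \<or> s0 = y" using u0 ux uy by auto
        then show False using xy by (auto simp: S'_def)
      qed
      have inj: "inj_on idx S'"
      proof (rule inj_onI)
        fix x y assume "x \<in> S'" "y \<in> S'" "idx x = idx y"
        then show "x = y" using key[of x y] key[of y x] by (metis linorder_neqE_nat)
      qed
      have "card S' \<le> m - 1"
      proof (cases "s 0 = 1")
        case True
        have "idx ` S' \<subseteq> {1..<2*k}"
        proof
          fix z assume "z \<in> idx ` S'"
          then obtain x where x: "x \<in> S'" "z = idx x" by blast
          have xb: "x < length b" using x Sb by (auto simp: S'_def)
          have "x > s0" using x s0min by (auto simp: S'_def le_less)
          then have "idx x \<noteq> 0" using I4 xb True by auto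
          then show "z \<in> {1..<2*k}" using I1 xb x by auto
        qed
        then have "card (idx ` S') \<le> 2*k - 1" using card_mono[of "{1..<2*k}"] by fastforce
        then show ?thesis using card_image[OF inj] True assms(5) by simp
      next
        case False
        have "idx ` S' \<subseteq> {..<2*k}" using I1 Sb by (auto simp: S'_def)
        then have "card (idx ` S') \<le> 2*k" using card_mono[of "{..<2*k}"] by fastforce
        then show ?thesis using card_image[OF inj] False assms(5) by simp
      qed
      then show ?thesis using cardS' assms(1,5) False by (auto split: if_splits)
    qed
  qed
qed

end
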